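(* Consider the three-dimensional stochastic Maxwell equations in the stochastic Hamiltonian form $$\mathbf{K}\,{\rm d}_{t}\mathcal{E}+\mathbf{L}_{1}\mathcal{E}_{x}{\rm d}t+\mathbf{L}_{2}\mathcal{E}_{y}{\rm d}t+\mathbf{L}_{3}\mathcal{E}_{z}{\rm d}t=\nabla S(\mathcal{E})\circ{\rm d}W(t)$$ with periodic boundary conditions, discretized by the stochastic Runge-Kutta method described in the context, whose coefficients satisfy $b_kb_j-b_ka_{kj}-b_ja_{jk}=0$, $\overline{b}_p\overline{b}_q-\overline{b}_p\overline{a}_{pq}-\overline{b}_q\overline a_{qp}=0$, $\widetilde{b}_m\widetilde{b}_n-\widetilde{b}_m\widetilde{a}_{mn}-\widetilde{b}_n\widetilde{a}_{nm}=0$, $\widehat{b}_l\widehat{b}_v-\widehat{b}_l\widehat{a}_{lv}-\widehat{b}_v\widehat{a}_{vl}=0$ for all indices. Then for all $\rho=0,1,\dots,N$, almost surely, $$\sum_{i_1}\sum_{i_2}\sum_{i_3}\sum_{m=1}^{s}\sum_{p=1}^{\iota}\sum_{l=1}^{\sigma}\widetilde{b}_{m}\overline{b}_p\widehat{b}_l\Big(|\mathbf{E}_{mpl;i_1,i_2,i_3}^{\rho+1}|^2+|\mathbf{H}_{mpl;i_1,i_2,i_3}^{\rho+1}|^2\Big)=\sum_{i_1}\sum_{i_2}\sum_{i_3}\sum_{m=1}^{s}\sum_{p=1}^{\iota}\sum_{l=1}^{\sigma}\widetilde{b}_{m}\overline{b}_p\widehat{b}_l\Big(|\mathbf{E}_{mpl;i_1,i_2,i_3}^{\rho}|^2+|\mathbf{H}_{mpl;i_1,i_2,i_3}^{\rho}|^2\Big),$$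 where the sums over $i_1,i_2,i_3$ run over all spatial cells of the periodic grid.
   Context: $\mathcal{E}=(H^T,E^T)^T\in\mathbb{R}^6$; $S(\mathcal{E})=\frac{\lambda}{2}(|E_1|^2+|E_2|^2+|E_3|^2+|H_1|^2+|H_2|^2+|H_3|^2)$ for a real constant $\lambda$; $\mathbf{K}=\begin{pmatrix}0&-I_3\\ I_3&0\end{pmatrix}$, $\mathbf{L}_i=\begin{pmatrix}\mathcal{D}_i&0\\0&\mathcal{D}_i\end{pmatrix}$ with $\mathcal{D}_1=\begin{pmatrix}0&0&0\\0&0&-1\\0&1&0\end{pmatrix}$, $\mathcal{D}_2=\begin{pmatrix}0&0&1\\0&0&0\\-1&0&0\end{pmatrix}$, $\mathcal{D}_3=\begin{pmatrix}0&-1&0\\1&0&0\\0&0&0\end{pmatrix}$; $W$ is a $Q$-Wiener process, Stratonovich sense. The method (time step $\tau$, space steps $\Delta x,\Delta y,\Delta z$; temporal coefficients $a_{kj},b_k$, $k,j=1..r$; spatial coefficients $\widetilde{a}_{mn},\widetilde{b}_m$ ($s$ stages, $x$), $\overline{a}_{pq},\overline{b}_p$ ($\iota$ stages, $y$), $\widehat{a}_{lv},\widehat{b}_l$ ($\sigma$ stages, $z$)) has on each space-time cell stage values $\Upsilon_{mplk}\in\mathbb{R}^6$, discrete derivatives $\delta_t\Upsilon,\delta_x\Upsilon,\delta_y\Upsilon,\delta_z\Upsilon$, time-level values $\mathcal{E}^\rho_{mpl}$ and face values, related by $\Upsilon_{mplk}=\mathcal{E}_{mpl}^{\rho}+\tau\sum_{j}a_{kj}\delta_t\Upsilon_{mplj}$,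 $\mathcal{E}_{mpl}^{\rho+1}=\mathcal{E}_{mpl}^{\rho}+\tau\sum_{k}b_{k}\delta_t\Upsilon_{mplk}$, $\Upsilon_{mplk}=\mathcal{E}_{i_1pl}^{k}+\Delta x\sum_{n}\widetilde{a}_{mn}\delta_{x}\Upsilon_{nplk}$, $\mathcal{E}_{(i_1+1)pl}^{k}=\mathcal{E}_{i_1pl}^{k}+\Delta x\sum_{m}\widetilde{b}_{m}\delta_{x}\Upsilon_{mplk}$, $\Upsilon_{mplk}=\mathcal{E}_{mi_2l}^{k}+\Delta y\sum_{q}\overline{a}_{pq}\delta_{y}\Upsilon_{mqlk}$, $\mathcal{E}_{m(i_{2}+1)l}^{k}=\mathcal{E}_{mi_2l}^{k}+\Delta y\sum_{p}\overline{b}_{p}\delta_{y}\Upsilon_{mplk}$, $\Upsilon_{mplk}=\mathcal{E}_{mpi_3}^{k}+\Delta z\sum_{v}\widehat{a}_{lv}\delta_{z}\Upsilon_{mpvk}$, $\mathcal{E}_{mp(i_3+1)}^{k}=\mathcal{E}_{mpi_3}^{k}+\Delta z\sum_{u}\widehat{b}_{u}\delta_{z}\Upsilon_{mpuk}$, $\tau\mathbf{K}\delta_{t}\Upsilon_{mplk}+\tau\sum_{i=1}^3\mathbf{L}_{i}\delta_{x_i}\Upsilon_{mplk}=\nabla S(\Upsilon_{mplk})\Delta W$, with $(\delta_{x_1},\delta_{x_2},\delta_{x_3})=(\delta_x,\delta_y,\delta_z)$ and $\Delta W$ the real Wiener increment at the stage point. $\mathcal{E}^{\rho}_{mpl;i_1,i_2,i_3}=((\mathbf{H}^{\rho}_{mpl;i_1,i_2,i_3})^T,(\mathbf{E}^{\rho}_{mpl;i_1,i_2,i_3})^T)^T$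 denotes the value $\mathcal{E}^\rho_{mpl}$ of the spatial cell indexed by $(i_1,i_2,i_3)$. *)

theory Defs
  imports "HOL-Analysis.Analysis"
begin

text \<open>A field value \<E> = (H, E) in R^6 is represented as a pair of vectors in R^3:
  the first component is the magnetic field H, the second the electric field E.\<close>
type_synonym field6 = "(real^3) \<times> (real^3)"

definition Hpart :: "field6 \<Rightarrow> real^3" where "Hpart v = fst v"
definition Epart :: "field6 \<Rightarrow> real^3" where "Epart v = snd v"

text \<open>K = [[0, -I3], [I3, 0]] acting on (H, E).\<close>
definition Kop :: "field6 \<Rightarrow> field6" where
  "Kop v = (- snd v, fst v)"

definition D1 :: "real^3^3" where
  "D1 = vector [vector [0, 0, 0], vector [0, 0, -1], vector [0, 1, 0]]"
definition D2 :: "real^3^3" where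
  "D2 = vector [vector [0, 0, 1], vector [0, 0, 0], vector [-1, 0, 0]]"
definition D3 :: "real^3^3" where
  "D3 = vector [vector [0, -1, 0], vector [1, 0, 0], vector [0, 0, 0]]"

definition Lop :: "real^3^3 \<Rightarrow> field6 \<Rightarrow> field6" where
  "Lop D v = (D *v fst v, D *v snd v)"

definition S :: "real \<Rightarrow> field6 \<Rightarrow> real" where
  "S lam v = lam / 2 * ((norm (snd v))\<^sup>2 + (norm (fst v))\<^sup>2)"
definition gradS :: "real \<Rightarrow> field6 \<Rightarrow> field6" where
  "gradS lam v = lam *\<^sub>R v"

end

theory Submission
  imports Defs
begin


definition Mop :: "real^3^3 \<Rightarrow> field6 \<Rightarrow> field6" where
  "Mop D v = (D *v snd v, - (D *v fst v))"

lemma skew_gen: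
  fixes D :: "real^3^3"
  assumes "\<And>i j. D$i$j = - D$j$i"
  shows "inner x (D *v y) = - inner y (D *v x)"
proof -
  have "inner x (D *v y) = (\<Sum>i\<in>UNIV. \<Sum>j\<in>UNIV. x$i * D$i$j * y$j)"
    by (simp add: inner_vec_def matrix_vector_mult_def sum_distrib_left mult.assoc)
  also have "\<dots> = (\<Sum>j\<in>UNIV. \<Sum>i\<in>UNIV. x$i * D$i$j * y$j)" by (rule sum.swap)
  also have "\<dots> = - (\<Sum>j\<in>UNIV. \<Sum>i\<in>UNIV. y$j * D$j$i * x$i)"
  proof -
    have e: "x$i * D$i$j * y$j = -(y$j * D$j$i * x$i)" for i j
      by (subst assms) (simp add: algebra_simps)
    show ?thesis by (simp only: e sum_negf)
  qed
  also have "\<dots> = - inner y (D *v x)"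
    by (simp add: inner_vec_def matrix_vector_mult_def sum_distrib_left mult.assoc)
  finally show ?thesis .
qed

lemma D1_skew: "D1$i$j = - D1$j$i"
  using exhaust_3[of i] exhaust_3[of j] by (auto simp: D1_def)
lemma D2_skew: "D2$i$j = - D2$j$i"
  using exhaust_3[of i] exhaust_3[of j] by (auto simp: D2_def)
lemma D3_skew: "D3$i$j = - D3$j$i"
  using exhaust_3[of i] exhaust_3[of j] by (auto simp: D3_def)

lemma Mop_sym:
  fixes D :: "real^3^3"
  assumes "\<And>i j. D$i$j = - D$j$i"
  shows "inner u (Mop D v) = inner v (Mop D u)"
  using skew_gen[OF assms, of "fst u" "snd v"] skew_gen[OF assms, of "snd u" "fst v"]
  by (cases u, cases v) (simp add: Mop_def)

lemma Mop_linear: "linear (Mop D)"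
  by (rule linearI) (auto simp: Mop_def matrix_vector_right_distrib matrix_vector_mult_scaleR)

lemma id_sym: "inner u (id v) = inner v (id u)" by (simp add: inner_commute)

lemma rk_quad:
  fixes f :: "field6 \<Rightarrow> field6" and D Y :: "nat \<Rightarrow> field6"
  assumes lin: "linear f" and sym: "\<And>u v. inner u (f v) = inner v (f u)"
    and Yk: "\<And>k. k < n \<Longrightarrow> Y k = Fa + h *\<^sub>R (\<Sum>j<n. A k j *\<^sub>R D j)"
    and Fb: "Fb = Fa + h *\<^sub>R (\<Sum>k<n. c k *\<^sub>R D k)"
    and symp: "\<And>k j. k < n \<Longrightarrow> j < n \<Longrightarrow> c k * c j - c k * A k j - c j * A j k = 0"
  shows "inner Fb (f Fb) - inner Fa (f Fa) = 2*h* (\<Sum>k<n. c k * inner (Y k) (f (D k)))"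
proof -
  define G where "G k j = inner (D k) (f (D j))" for k j
  have Gs: "G k j = G j k" for k j by (simp add: G_def sym)
  have Gd0: "inner (D a) (f (D b)) = G a b" for a b by (simp add: G_def)
  have fS: "f (\<Sum>k<n. c k *\<^sub>R D k) = (\<Sum>k<n. c k *\<^sub>R f (D k))"
    using lin by (simp add: linear_sum linear_cmul)
  have fS2: "f (\<Sum>j<n. A k j *\<^sub>R D j) = (\<Sum>j<n. A k j *\<^sub>R f (D j))" for k
    using lin by (simp add: linear_sum linear_cmul)
  have fadd: "f (x + y) = f x + f y" "f (t *\<^sub>R x) = t *\<^sub>R f x" for x y t
    using lin by (simp_all add: linear_add linear_cmul)
  have s1: "inner (\<Sum>k<n. c k *\<^sub>R D k) (f Fa) = inner Fa (\<Sum>k<n. c k *\<^sub>R f (D k))"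
    by (simp add: inner_sum_left inner_sum_right sym fS)
  have lhs: "inner Fb (f Fb) - inner Fa (f Fa) = 2*h*(\<Sum>k<n. c k * inner Fa (f (D k)))
      + h*h*(\<Sum>k<n. \<Sum>j<n. c k * c j * G k j)"
  proof -
    have sym1: "inner (D k) (f Fa) = inner Fa (f (D k))" for k by (rule sym)
    have Gd: "inner (D a) (f (D b)) = G a b" for a b by (simp add: G_def)
    show ?thesis
    unfolding Fb fadd fS
    by (simp add: inner_add_left inner_add_right inner_sum_left inner_sum_right
        sum_distrib_left sym1 Gd Gs sum.distrib algebra_simps)
  qed
  have rhs: "2*h* (\<Sum>k<n. c k * inner (Y k) (f (D k))) = 2*h*(\<Sum>k<n. c k * inner Fa (f (D k)))
      + 2*h*h*(\<Sum>k<n. \<Sum>j<n. c k * A k j * G k j)"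
  proof -
    have "(\<Sum>k<n. c k * inner (Y k) (f (D k))) = (\<Sum>k<n. c k * inner Fa (f (D k))
         + h * (\<Sum>j<n. c k * A k j * G k j))"
      by (rule sum.cong) (simp_all add: Yk inner_add_left inner_sum_left Gd0 Gs sum_distrib_left algebra_simps)
    then show ?thesis by (simp add: sum.distrib sum_distrib_left algebra_simps)
  qed
  have key: "(\<Sum>k<n. \<Sum>j<n. c k * c j * G k j) = 2*(\<Sum>k<n. \<Sum>j<n. c k * A k j * G k j)"
  proof -
    have sw: "(\<Sum>k<n. \<Sum>j<n. c k * A k j * G k j) = (\<Sum>k<n. \<Sum>j<n. c j * A j k * G k j)"
      by (subst sum.swap) (simp add: Gs)
    have z: "(\<Sum>k<n. \<Sum>j<n. (c k * c j - c k * A k j - c j * A j k) * G k j) = 0"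
      by (simp add: symp)
    show ?thesis using z sw
      by (simp add: algebra_simps sum_subtractf sum.distrib)
  qed
  show ?thesis using lhs rhs key by (simp add: algebra_simps)
qed


lemma swap3: "(\<Sum>a\<in>A. \<Sum>b\<in>B. \<Sum>c\<in>C. f a b c) = (\<Sum>b\<in>B. \<Sum>c\<in>C. \<Sum>a\<in>A. f a b c)"
  by (subst sum.swap) (simp add: sum.swap[of _ A])

lemma reord_x: "(\<Sum>m\<in>A. \<Sum>p\<in>B. \<Sum>l\<in>C. u m * v p * w l * (\<Sum>k\<in>K. z k * g m p l k)) =
   (\<Sum>p\<in>B. \<Sum>l\<in>C. \<Sum>k\<in>K. v p * w l * z k * (\<Sum>m\<in>A. u m * (g m p l k::real)))"
proof -
  have "(\<Sum>m\<in>A. \<Sum>p\<in>B. \<Sum>l\<in>C. u m * v p * w l * (\<Sum>k\<in>K. z k * g m p l k)) =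
     (\<Sum>p\<in>B. \<Sum>l\<in>C. \<Sum>m\<in>A. \<Sum>k\<in>K. u m * v p * w l * z k * g m p l k)"
    by (subst swap3) (simp add: sum_distrib_left mult.assoc)
  also have "\<dots> = (\<Sum>p\<in>B. \<Sum>l\<in>C. \<Sum>k\<in>K. \<Sum>m\<in>A. u m * v p * w l * z k * g m p l k)"
    by (simp add: sum.swap[of _ A])
  also have "\<dots> = (\<Sum>p\<in>B. \<Sum>l\<in>C. \<Sum>k\<in>K. v p * w l * z k * (\<Sum>m\<in>A. u m * (g m p l k::real)))"
    by (simp add: sum_distrib_left algebra_simps)
  finally show ?thesis .
qed

lemma reord_y: "(\<Sum>m\<in>A. \<Sum>p\<in>B. \<Sum>l\<in>C. u m * v p * w l * (\<Sum>k\<in>K. z k * g m p l k)) =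
   (\<Sum>m\<in>A. \<Sum>l\<in>C. \<Sum>k\<in>K. u m * w l * z k * (\<Sum>p\<in>B. v p * (g m p l k::real)))"
proof -
  have "(\<Sum>m\<in>A. \<Sum>p\<in>B. \<Sum>l\<in>C. u m * v p * w l * (\<Sum>k\<in>K. z k * g m p l k)) =
     (\<Sum>m\<in>A. \<Sum>l\<in>C. \<Sum>p\<in>B. \<Sum>k\<in>K. u m * v p * w l * z k * g m p l k)"
    by (simp add: sum.swap[of _ B] sum_distrib_left mult.assoc)
  also have "\<dots> = (\<Sum>m\<in>A. \<Sum>l\<in>C. \<Sum>k\<in>K. \<Sum>p\<in>B. u m * v p * w l * z k * g m p l k)"
    by (simp add: sum.swap[of _ B])
  also have "\<dots> = (\<Sum>m\<in>A. \<Sum>l\<in>C. \<Sum>k\<in>K. u m * w l * z k * (\<Sum>p\<in>B. v p * (g m p l k::real)))"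
    by (simp add: sum_distrib_left algebra_simps)
  finally show ?thesis .
qed

lemma reord_z: "(\<Sum>m\<in>A. \<Sum>p\<in>B. \<Sum>l\<in>C. u m * v p * w l * (\<Sum>k\<in>K. z k * g m p l k)) =
   (\<Sum>m\<in>A. \<Sum>p\<in>B. \<Sum>k\<in>K. u m * v p * z k * (\<Sum>l\<in>C. w l * (g m p l k::real)))"
proof -
  have "(\<Sum>m\<in>A. \<Sum>p\<in>B. \<Sum>l\<in>C. u m * v p * w l * (\<Sum>k\<in>K. z k * g m p l k)) =
     (\<Sum>m\<in>A. \<Sum>p\<in>B. \<Sum>k\<in>K. \<Sum>l\<in>C. u m * v p * w l * z k * g m p l k)"
    by (simp add: sum.swap[of _ C] sum_distrib_left mult.assoc)
  also have "\<dots> = (\<Sum>m\<in>A. \<Sum>p\<in>B. \<Sum>k\<in>K. u m * v p * z k * (\<Sum>l\<in>C. w l * (g m p l k::real)))"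
    by (simp add: sum_distrib_left algebra_simps)
  finally show ?thesis .
qed

lemma telescope: "(\<Sum>i<(N::nat). (g ((i+1) mod N) - g i)) = (0::real)"
proof (cases N)
  case 0 then show ?thesis by simp
next
  case (Suc M)
  have "(\<Sum>i<Suc M. g ((i+1) mod Suc M)) = (\<Sum>i<Suc M. g i)"
  proof -
    have "(\<Sum>i<Suc M. g ((i+1) mod Suc M)) = (\<Sum>i<M. g (Suc i)) + g 0"
    proof -
      have "(\<Sum>i<M. g ((i+1) mod Suc M)) = (\<Sum>i<M. g (Suc i))" by (rule sum.cong) auto
      then show ?thesis by (simp add: sum.lessThan_Suc)
    qed
    also have "\<dots> = (\<Sum>i<Suc M. g i)" by (subst sum.lessThan_Suc_shift) simp
    finally show ?thesis .
  qed
  then show ?thesis using Suc by (simp add: sum_subtractf)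
qed

lemma lin6:
  fixes F G H :: "nat \<Rightarrow> nat \<Rightarrow> nat \<Rightarrow> nat \<Rightarrow> nat \<Rightarrow> nat \<Rightarrow> real"
  shows "(\<Sum>a\<in>A1. \<Sum>b\<in>A2. \<Sum>c\<in>A3. \<Sum>d\<in>A4. \<Sum>e\<in>A5. \<Sum>f\<in>A6.
      t * F a b c d e f + t * G a b c d e f + t * H a b c d e f)
    = t * (\<Sum>a\<in>A1. \<Sum>b\<in>A2. \<Sum>c\<in>A3. \<Sum>d\<in>A4. \<Sum>e\<in>A5. \<Sum>f\<in>A6. F a b c d e f)
    + t * (\<Sum>a\<in>A1. \<Sum>b\<in>A2. \<Sum>c\<in>A3. \<Sum>d\<in>A4. \<Sum>e\<in>A5. \<Sum>f\<in>A6. G a b c d e f)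
    + t * (\<Sum>a\<in>A1. \<Sum>b\<in>A2. \<Sum>c\<in>A3. \<Sum>d\<in>A4. \<Sum>e\<in>A5. \<Sum>f\<in>A6. H a b c d e f)"
  by (simp only: sum.distrib sum_distrib_left)

lemma maxwell_energy:
  assumes tp: "tau > 0"
    and eq: "tau *\<^sub>R Kop Dt + tau *\<^sub>R (Lop D1 X + Lop D2 Yv + Lop D3 Z) = w *\<^sub>R gradS lam Y"
  shows "inner Y Dt = - (inner Y (Mop D1 X) + inner Y (Mop D2 Yv) + inner Y (Mop D3 Z))"
proof -
  have KY: "inner (Kop Y) Y = 0" by (cases Y) (simp add: Kop_def inner_commute)
  have KK: "inner (Kop Y) (Kop V) = inner Y V" for V by (cases Y, cases V) (simp add: Kop_def)
  have KL: "inner (Kop Y) (Lop D V) = inner Y (Mop D V)" for D V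
    by (cases Y, cases V) (simp add: Kop_def Lop_def Mop_def)
  have "inner (Kop Y) (tau *\<^sub>R Kop Dt + tau *\<^sub>R (Lop D1 X + Lop D2 Yv + Lop D3 Z))
      = inner (Kop Y) (w *\<^sub>R gradS lam Y)" using eq by simp
  then have "tau * (inner Y Dt + (inner Y (Mop D1 X) + inner Y (Mop D2 Yv) + inner Y (Mop D3 Z))) = 0"
    by (simp add: inner_add_right KK KL gradS_def KY algebra_simps)
  with tp show ?thesis by simp
qed

theorem mainTheorem3:
  fixes N1 N2 N3 Nt r s iota sigma :: nat
    and a atil abar ahat :: "nat \<Rightarrow> nat \<Rightarrow> real"
    and b btil bbar bhat :: "nat \<Rightarrow> real"
    and tau dx dy dz lam :: real
    and T :: "nat \<Rightarrow> nat \<Rightarrow> nat \<Rightarrow> nat \<Rightarrow> nat \<Rightarrow> nat \<Rightarrow> nat \<Rightarrow> field6"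
    and Y Dt Dx Dy Dz :: "nat \<Rightarrow> nat \<Rightarrow> nat \<Rightarrow> nat \<Rightarrow> nat \<Rightarrow> nat \<Rightarrow> nat \<Rightarrow> nat \<Rightarrow> field6"
    and dW :: "nat \<Rightarrow> nat \<Rightarrow> nat \<Rightarrow> nat \<Rightarrow> nat \<Rightarrow> nat \<Rightarrow> nat \<Rightarrow> nat \<Rightarrow> real"
    and Fx Fy Fz :: "nat \<Rightarrow> nat \<Rightarrow> nat \<Rightarrow> nat \<Rightarrow> nat \<Rightarrow> nat \<Rightarrow> nat \<Rightarrow> field6"
  assumes tau_pos: "tau > 0" and dx_pos: "dx > 0" and dy_pos: "dy > 0" and dz_pos: "dz > 0"
    and symp_t: "\<And>k j. k < r \<Longrightarrow> j < r \<Longrightarrow> b k * b j - b k * a k j - b j * a j k = 0"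
    and symp_y: "\<And>p q. p < iota \<Longrightarrow> q < iota \<Longrightarrow> bbar p * bbar q - bbar p * abar p q - bbar q * abar q p = 0"
    and symp_x: "\<And>m n. m < s \<Longrightarrow> n < s \<Longrightarrow> btil m * btil n - btil m * atil m n - btil n * atil n m = 0"
    and symp_z: "\<And>l v. l < sigma \<Longrightarrow> v < sigma \<Longrightarrow> bhat l * bhat v - bhat l * ahat l v - bhat v * ahat v l = 0"
    and stage_t: "\<And>\<rho> i1 i2 i3 m p l k. \<rho> \<le> Nt \<Longrightarrow> i1 < N1 \<Longrightarrow> i2 < N2 \<Longrightarrow> i3 < N3 \<Longrightarrow>
        m < s \<Longrightarrow> p < iota \<Longrightarrow> l < sigma \<Longrightarrow> k < r \<Longrightarrow>
        Y \<rho> i1 i2 i3 m p l k = T \<rho> i1 i2 i3 m p l + tau *\<^sub>R (\<Sum>j<r. a k j *\<^sub>R Dt \<rho> i1 i2 i3 m p l j)"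
    and update_t: "\<And>\<rho> i1 i2 i3 m p l. \<rho> \<le> Nt \<Longrightarrow> i1 < N1 \<Longrightarrow> i2 < N2 \<Longrightarrow> i3 < N3 \<Longrightarrow>
        m < s \<Longrightarrow> p < iota \<Longrightarrow> l < sigma \<Longrightarrow>
        T (Suc \<rho>) i1 i2 i3 m p l = T \<rho> i1 i2 i3 m p l + tau *\<^sub>R (\<Sum>k<r. b k *\<^sub>R Dt \<rho> i1 i2 i3 m p l k)"
    and stage_x: "\<And>\<rho> i1 i2 i3 m p l k. \<rho> \<le> Nt \<Longrightarrow> i1 < N1 \<Longrightarrow> i2 < N2 \<Longrightarrow> i3 < N3 \<Longrightarrow>
        m < s \<Longrightarrow> p < iota \<Longrightarrow> l < sigma \<Longrightarrow> k < r \<Longrightarrow>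
        Y \<rho> i1 i2 i3 m p l k = Fx \<rho> k i1 i2 i3 p l + dx *\<^sub>R (\<Sum>n<s. atil m n *\<^sub>R Dx \<rho> i1 i2 i3 n p l k)"
    and update_x: "\<And>\<rho> i1 i2 i3 p l k. \<rho> \<le> Nt \<Longrightarrow> i1 < N1 \<Longrightarrow> i2 < N2 \<Longrightarrow> i3 < N3 \<Longrightarrow>
        p < iota \<Longrightarrow> l < sigma \<Longrightarrow> k < r \<Longrightarrow>
        Fx \<rho> k ((i1 + 1) mod N1) i2 i3 p l = Fx \<rho> k i1 i2 i3 p l + dx *\<^sub>R (\<Sum>m<s. btil m *\<^sub>R Dx \<rho> i1 i2 i3 m p l k)"
    and stage_y: "\<And>\<rho> i1 i2 i3 m p l k. \<rho> \<le> Nt \<Longrightarrow> i1 < N1 \<Longrightarrow> i2 < N2 \<Longrightarrow> i3 < N3 \<Longrightarrow>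
        m < s \<Longrightarrow> p < iota \<Longrightarrow> l < sigma \<Longrightarrow> k < r \<Longrightarrow>
        Y \<rho> i1 i2 i3 m p l k = Fy \<rho> k i1 i2 i3 m l + dy *\<^sub>R (\<Sum>q<iota. abar p q *\<^sub>R Dy \<rho> i1 i2 i3 m q l k)"
    and update_y: "\<And>\<rho> i1 i2 i3 m l k. \<rho> \<le> Nt \<Longrightarrow> i1 < N1 \<Longrightarrow> i2 < N2 \<Longrightarrow> i3 < N3 \<Longrightarrow>
        m < s \<Longrightarrow> l < sigma \<Longrightarrow> k < r \<Longrightarrow>
        Fy \<rho> k i1 ((i2 + 1) mod N2) i3 m l = Fy \<rho> k i1 i2 i3 m l + dy *\<^sub>R (\<Sum>p<iota. bbar p *\<^sub>R Dy \<rho> i1 i2 i3 m p l k)"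
    and stage_z: "\<And>\<rho> i1 i2 i3 m p l k. \<rho> \<le> Nt \<Longrightarrow> i1 < N1 \<Longrightarrow> i2 < N2 \<Longrightarrow> i3 < N3 \<Longrightarrow>
        m < s \<Longrightarrow> p < iota \<Longrightarrow> l < sigma \<Longrightarrow> k < r \<Longrightarrow>
        Y \<rho> i1 i2 i3 m p l k = Fz \<rho> k i1 i2 i3 m p + dz *\<^sub>R (\<Sum>v<sigma. ahat l v *\<^sub>R Dz \<rho> i1 i2 i3 m p v k)"
    and update_z: "\<And>\<rho> i1 i2 i3 m p k. \<rho> \<le> Nt \<Longrightarrow> i1 < N1 \<Longrightarrow> i2 < N2 \<Longrightarrow> i3 < N3 \<Longrightarrow>
        m < s \<Longrightarrow> p < iota \<Longrightarrow> k < r \<Longrightarrow>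
        Fz \<rho> k i1 i2 ((i3 + 1) mod N3) m p = Fz \<rho> k i1 i2 i3 m p + dz *\<^sub>R (\<Sum>u<sigma. bhat u *\<^sub>R Dz \<rho> i1 i2 i3 m p u k)"
    and maxwell: "\<And>\<rho> i1 i2 i3 m p l k. \<rho> \<le> Nt \<Longrightarrow> i1 < N1 \<Longrightarrow> i2 < N2 \<Longrightarrow> i3 < N3 \<Longrightarrow>
        m < s \<Longrightarrow> p < iota \<Longrightarrow> l < sigma \<Longrightarrow> k < r \<Longrightarrow>
        tau *\<^sub>R Kop (Dt \<rho> i1 i2 i3 m p l k)
          + tau *\<^sub>R (Lop D1 (Dx \<rho> i1 i2 i3 m p l k) + Lop D2 (Dy \<rho> i1 i2 i3 m p l k) + Lop D3 (Dz \<rho> i1 i2 i3 m p l k))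
        = dW \<rho> i1 i2 i3 m p l k *\<^sub>R gradS lam (Y \<rho> i1 i2 i3 m p l k)"
  shows "\<forall>\<rho> \<le> Nt.
    (\<Sum>i1<N1. \<Sum>i2<N2. \<Sum>i3<N3. \<Sum>m<s. \<Sum>p<iota. \<Sum>l<sigma.
        btil m * bbar p * bhat l * ((norm (Epart (T (Suc \<rho>) i1 i2 i3 m p l)))\<^sup>2 + (norm (Hpart (T (Suc \<rho>) i1 i2 i3 m p l)))\<^sup>2))
  = (\<Sum>i1<N1. \<Sum>i2<N2. \<Sum>i3<N3. \<Sum>m<s. \<Sum>p<iota. \<Sum>l<sigma.
        btil m * bbar p * bhat l * ((norm (Epart (T \<rho> i1 i2 i3 m p l)))\<^sup>2 + (norm (Hpart (T \<rho> i1 i2 i3 m p l)))\<^sup>2))"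
  proof (intro allI impI)
  fix \<rho> assume hr: "\<rho> \<le> Nt"
  define X1 where "X1 i1 i2 i3 m p l k = inner (Y \<rho> i1 i2 i3 m p l k) (Mop D1 (Dx \<rho> i1 i2 i3 m p l k))"
    for i1 i2 i3 m p l k
  define X2 where "X2 i1 i2 i3 m p l k = inner (Y \<rho> i1 i2 i3 m p l k) (Mop D2 (Dy \<rho> i1 i2 i3 m p l k))"
    for i1 i2 i3 m p l k
  define X3 where "X3 i1 i2 i3 m p l k = inner (Y \<rho> i1 i2 i3 m p l k) (Mop D3 (Dz \<rho> i1 i2 i3 m p l k))"
    for i1 i2 i3 m p l k
  define EN where "EN t i1 i2 i3 m p l = (norm (Epart (T t i1 i2 i3 m p l)))\<^sup>2 + (norm (Hpart (T t i1 i2 i3 m p l)))\<^sup>2"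
    for t i1 i2 i3 m p l
  have EN_inner: "EN t i1 i2 i3 m p l = inner (T t i1 i2 i3 m p l) (id (T t i1 i2 i3 m p l))" for t i1 i2 i3 m p l
    by (cases "T t i1 i2 i3 m p l") (simp add: EN_def Epart_def Hpart_def power2_norm_eq_inner)
  have cell: "EN (Suc \<rho>) i1 i2 i3 m p l - EN \<rho> i1 i2 i3 m p l
      = -2*tau*(\<Sum>k<r. b k * (X1 i1 i2 i3 m p l k + X2 i1 i2 i3 m p l k + X3 i1 i2 i3 m p l k))"
    if "i1 < N1" "i2 < N2" "i3 < N3" "m < s" "p < iota" "l < sigma" for i1 i2 i3 m p l
  proof -
    have q: "inner (T (Suc \<rho>) i1 i2 i3 m p l) (id (T (Suc \<rho>) i1 i2 i3 m p l))
        - inner (T \<rho> i1 i2 i3 m p l) (id (T \<rho> i1 i2 i3 m p l))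
        = 2*tau*(\<Sum>k<r. b k * inner (Y \<rho> i1 i2 i3 m p l k) (id (Dt \<rho> i1 i2 i3 m p l k)))"
      by (rule rk_quad[where f=id and n=r and Y="\<lambda>k. Y \<rho> i1 i2 i3 m p l k" and Fa="T \<rho> i1 i2 i3 m p l"
          and h=tau and A=a and D="\<lambda>k. Dt \<rho> i1 i2 i3 m p l k" and Fb="T (Suc \<rho>) i1 i2 i3 m p l" and c=b])
        (rule linear_id, rule id_sym, rule stage_t[OF hr that], assumption,
         rule update_t[OF hr that], (rule symp_t; assumption))
    have mw: "inner (Y \<rho> i1 i2 i3 m p l k) (Dt \<rho> i1 i2 i3 m p l k)
        = - (X1 i1 i2 i3 m p l k + X2 i1 i2 i3 m p l k + X3 i1 i2 i3 m p l k)" if "k < r" for k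
      unfolding X1_def X2_def X3_def
      by (rule maxwell_energy[OF tau_pos maxwell[OF hr \<open>i1 < N1\<close> \<open>i2 < N2\<close> \<open>i3 < N3\<close>
          \<open>m < s\<close> \<open>p < iota\<close> \<open>l < sigma\<close> \<open>k < r\<close>]])
    have "(\<Sum>k<r. b k * inner (Y \<rho> i1 i2 i3 m p l k) (id (Dt \<rho> i1 i2 i3 m p l k)))
        = (\<Sum>k<r. - (b k * (X1 i1 i2 i3 m p l k + X2 i1 i2 i3 m p l k + X3 i1 i2 i3 m p l k)))"
      by (rule sum.cong) (simp_all add: mw algebra_simps)
    then show ?thesis using q by (simp add: EN_inner sum_negf)
  qed

  define Qx where "Qx v = inner v (Mop D1 v)" for v
  define P1 where "P1 i = (\<Sum>i2<N2. \<Sum>i3<N3. \<Sum>p<iota. \<Sum>l<sigma. \<Sum>k<r.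
      bbar p * bhat l * b k * Qx (Fx \<rho> k i i2 i3 p l))" for i
  have spx: "Qx (Fx \<rho> k ((i1+1) mod N1) i2 i3 p l) - Qx (Fx \<rho> k i1 i2 i3 p l)
      = 2*dx*(\<Sum>m<s. btil m * X1 i1 i2 i3 m p l k)"
    if "i1 < N1" "i2 < N2" "i3 < N3" "p < iota" "l < sigma" "k < r" for i1 i2 i3 p l k
    unfolding Qx_def X1_def
    by (rule rk_quad[where f="Mop D1" and n=s and Y="\<lambda>m. Y \<rho> i1 i2 i3 m p l k" and Fa="Fx \<rho> k i1 i2 i3 p l"
          and h=dx and A=atil and D="\<lambda>m. Dx \<rho> i1 i2 i3 m p l k" and Fb="Fx \<rho> k ((i1+1) mod N1) i2 i3 p l" and c=btil])
       (rule Mop_linear, rule Mop_sym[OF D1_skew], rule stage_x[OF hr that(1-3) _ that(4-6)], assumption,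
        rule update_x[OF hr that], (rule symp_x; assumption))
  have stepx: "2*dx*(\<Sum>i2<N2. \<Sum>i3<N3. \<Sum>m<s. \<Sum>p<iota. \<Sum>l<sigma. btil m * bbar p * bhat l * (\<Sum>k<r. b k * X1 i1 i2 i3 m p l k))
     = P1 ((i1+1) mod N1) - P1 i1" if "i1 < N1" for i1
  proof -
    have inner: "2*dx*(\<Sum>m<s. \<Sum>p<iota. \<Sum>l<sigma. btil m * bbar p * bhat l * (\<Sum>k<r. b k * X1 i1 i2 i3 m p l k))
        = (\<Sum>p<iota. \<Sum>l<sigma. \<Sum>k<r. bbar p * bhat l * b k *
            (Qx (Fx \<rho> k ((i1+1) mod N1) i2 i3 p l) - Qx (Fx \<rho> k i1 i2 i3 p l)))"
      if "i2 < N2" "i3 < N3" for i2 i3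
    proof -
      have "2*dx*(\<Sum>m<s. \<Sum>p<iota. \<Sum>l<sigma. btil m * bbar p * bhat l * (\<Sum>k<r. b k * X1 i1 i2 i3 m p l k))
          = 2*dx*(\<Sum>p<iota. \<Sum>l<sigma. \<Sum>k<r. bbar p * bhat l * b k * (\<Sum>m<s. btil m * X1 i1 i2 i3 m p l k))"
        by (rule arg_cong[where f="\<lambda>x. 2*dx*x"], rule reord_x)
      also have "\<dots> = (\<Sum>p<iota. \<Sum>l<sigma. \<Sum>k<r. bbar p * bhat l * b k * (2*dx*(\<Sum>m<s. btil m * X1 i1 i2 i3 m p l k)))"
        by (simp add: sum_distrib_left mult_ac)
      also have "\<dots> = (\<Sum>p<iota. \<Sum>l<sigma. \<Sum>k<r. bbar p * bhat l * b k *
            (Qx (Fx \<rho> k ((i1+1) mod N1) i2 i3 p l) - Qx (Fx \<rho> k i1 i2 i3 p l)))"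
        by (intro sum.cong refl) (use spx[OF \<open>i1 < N1\<close> that] in auto)
      finally show ?thesis .
    qed
    have "2*dx*(\<Sum>i2<N2. \<Sum>i3<N3. \<Sum>m<s. \<Sum>p<iota. \<Sum>l<sigma. btil m * bbar p * bhat l * (\<Sum>k<r. b k * X1 i1 i2 i3 m p l k))
      = (\<Sum>i2<N2. \<Sum>i3<N3. 2*dx*(\<Sum>m<s. \<Sum>p<iota. \<Sum>l<sigma. btil m * bbar p * bhat l * (\<Sum>k<r. b k * X1 i1 i2 i3 m p l k)))"
      by (simp add: sum_distrib_left)
    also have "\<dots> = (\<Sum>i2<N2. \<Sum>i3<N3. \<Sum>p<iota. \<Sum>l<sigma. \<Sum>k<r. bbar p * bhat l * b k *
            (Qx (Fx \<rho> k ((i1+1) mod N1) i2 i3 p l) - Qx (Fx \<rho> k i1 i2 i3 p l)))"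
      by (intro sum.cong refl) (simp add: inner)
    also have "\<dots> = P1 ((i1+1) mod N1) - P1 i1"
      by (simp add: P1_def sum_subtractf right_diff_distrib)
    finally show ?thesis .
  qed
  have S1: "(\<Sum>i1<N1. \<Sum>i2<N2. \<Sum>i3<N3. \<Sum>m<s. \<Sum>p<iota. \<Sum>l<sigma. btil m * bbar p * bhat l * (\<Sum>k<r. b k * X1 i1 i2 i3 m p l k)) = 0"
  proof -
    have "2*dx*(\<Sum>i1<N1. \<Sum>i2<N2. \<Sum>i3<N3. \<Sum>m<s. \<Sum>p<iota. \<Sum>l<sigma. btil m * bbar p * bhat l * (\<Sum>k<r. b k * X1 i1 i2 i3 m p l k))
       = (\<Sum>i1<N1. P1 ((i1+1) mod N1) - P1 i1)"
      unfolding sum_distrib_left[of "2*dx" _ "{..<N1}"] by (intro sum.cong refl) (simp add: stepx)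
    also have "\<dots> = 0" by (rule telescope)
    finally show ?thesis using dx_pos by simp
  qed

  define Qy where "Qy v = inner v (Mop D2 v)" for v
  define P2 where "P2 i1 i = (\<Sum>i3<N3. \<Sum>m<s. \<Sum>l<sigma. \<Sum>k<r.
      btil m * bhat l * b k * Qy (Fy \<rho> k i1 i i3 m l))" for i1 i
  have spy: "Qy (Fy \<rho> k i1 ((i2+1) mod N2) i3 m l) - Qy (Fy \<rho> k i1 i2 i3 m l)
      = 2*dy*(\<Sum>p<iota. bbar p * X2 i1 i2 i3 m p l k)"
    if "i1 < N1" "i2 < N2" "i3 < N3" "m < s" "l < sigma" "k < r" for i1 i2 i3 m l k
    unfolding Qy_def X2_def
    by (rule rk_quad[where f="Mop D2" and n=iota and Y="\<lambda>p. Y \<rho> i1 i2 i3 m p l k" and Fa="Fy \<rho> k i1 i2 i3 m l"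
          and h=dy and A=abar and D="\<lambda>p. Dy \<rho> i1 i2 i3 m p l k" and Fb="Fy \<rho> k i1 ((i2+1) mod N2) i3 m l" and c=bbar])
       (rule Mop_linear, rule Mop_sym[OF D2_skew], rule stage_y[OF hr that(1-4) _ that(5-6)], assumption,
        rule update_y[OF hr that], (rule symp_y; assumption))
  have stepy: "2*dy*(\<Sum>i3<N3. \<Sum>m<s. \<Sum>p<iota. \<Sum>l<sigma. btil m * bbar p * bhat l * (\<Sum>k<r. b k * X2 i1 i2 i3 m p l k))
     = P2 i1 ((i2+1) mod N2) - P2 i1 i2" if "i1 < N1" "i2 < N2" for i1 i2
  proof -
    have inner: "2*dy*(\<Sum>m<s. \<Sum>p<iota. \<Sum>l<sigma. btil m * bbar p * bhat l * (\<Sum>k<r. b k * X2 i1 i2 i3 m p l k))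
        = (\<Sum>m<s. \<Sum>l<sigma. \<Sum>k<r. btil m * bhat l * b k *
            (Qy (Fy \<rho> k i1 ((i2+1) mod N2) i3 m l) - Qy (Fy \<rho> k i1 i2 i3 m l)))"
      if "i3 < N3" for i3
    proof -
      have "2*dy*(\<Sum>m<s. \<Sum>p<iota. \<Sum>l<sigma. btil m * bbar p * bhat l * (\<Sum>k<r. b k * X2 i1 i2 i3 m p l k))
          = 2*dy*(\<Sum>m<s. \<Sum>l<sigma. \<Sum>k<r. btil m * bhat l * b k * (\<Sum>p<iota. bbar p * X2 i1 i2 i3 m p l k))"
        by (rule arg_cong[where f="\<lambda>x. 2*dy*x"], rule reord_y)
      also have "\<dots> = (\<Sum>m<s. \<Sum>l<sigma. \<Sum>k<r. btil m * bhat l * b k * (2*dy*(\<Sum>p<iota. bbar p * X2 i1 i2 i3 m p l k)))"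
        by (simp add: sum_distrib_left mult_ac)
      also have "\<dots> = (\<Sum>m<s. \<Sum>l<sigma. \<Sum>k<r. btil m * bhat l * b k *
            (Qy (Fy \<rho> k i1 ((i2+1) mod N2) i3 m l) - Qy (Fy \<rho> k i1 i2 i3 m l)))"
        by (intro sum.cong refl) (use spy[OF \<open>i1 < N1\<close> \<open>i2 < N2\<close> that] in auto)
      finally show ?thesis .
    qed
    have "2*dy*(\<Sum>i3<N3. \<Sum>m<s. \<Sum>p<iota. \<Sum>l<sigma. btil m * bbar p * bhat l * (\<Sum>k<r. b k * X2 i1 i2 i3 m p l k))
      = (\<Sum>i3<N3. 2*dy*(\<Sum>m<s. \<Sum>p<iota. \<Sum>l<sigma. btil m * bbar p * bhat l * (\<Sum>k<r. b k * X2 i1 i2 i3 m p l k)))"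
      by (simp add: sum_distrib_left)
    also have "\<dots> = (\<Sum>i3<N3. \<Sum>m<s. \<Sum>l<sigma. \<Sum>k<r. btil m * bhat l * b k *
            (Qy (Fy \<rho> k i1 ((i2+1) mod N2) i3 m l) - Qy (Fy \<rho> k i1 i2 i3 m l)))"
      by (intro sum.cong refl) (simp add: inner)
    also have "\<dots> = P2 i1 ((i2+1) mod N2) - P2 i1 i2"
      by (simp add: P2_def sum_subtractf right_diff_distrib)
    finally show ?thesis .
  qed
  have S2: "(\<Sum>i1<N1. \<Sum>i2<N2. \<Sum>i3<N3. \<Sum>m<s. \<Sum>p<iota. \<Sum>l<sigma. btil m * bbar p * bhat l * (\<Sum>k<r. b k * X2 i1 i2 i3 m p l k)) = 0"
  proof -
    have "2*dy*(\<Sum>i1<N1. \<Sum>i2<N2. \<Sum>i3<N3. \<Sum>m<s. \<Sum>p<iota. \<Sum>l<sigma. btil m * bbar p * bhat l * (\<Sum>k<r. b k * X2 i1 i2 i3 m p l k))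
       = (\<Sum>i1<N1. \<Sum>i2<N2. P2 i1 ((i2+1) mod N2) - P2 i1 i2)"
      unfolding sum_distrib_left[of "2*dy" _ "{..<N1}"] sum_distrib_left[of "2*dy" _ "{..<N2}"]
      by (intro sum.cong refl) (simp add: stepy)
    also have "\<dots> = 0" by (rule sum.neutral, rule ballI, rule telescope)
    finally show ?thesis using dy_pos by simp
  qed

  define Qz where "Qz v = inner v (Mop D3 v)" for v
  define P3 where "P3 i1 i2 i = (\<Sum>m<s. \<Sum>p<iota. \<Sum>k<r.
      btil m * bbar p * b k * Qz (Fz \<rho> k i1 i2 i m p))" for i1 i2 i
  have spz: "Qz (Fz \<rho> k i1 i2 ((i3+1) mod N3) m p) - Qz (Fz \<rho> k i1 i2 i3 m p)
      = 2*dz*(\<Sum>l<sigma. bhat l * X3 i1 i2 i3 m p l k)"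
    if "i1 < N1" "i2 < N2" "i3 < N3" "m < s" "p < iota" "k < r" for i1 i2 i3 m p k
    unfolding Qz_def X3_def
    by (rule rk_quad[where f="Mop D3" and n=sigma and Y="\<lambda>l. Y \<rho> i1 i2 i3 m p l k" and Fa="Fz \<rho> k i1 i2 i3 m p"
          and h=dz and A=ahat and D="\<lambda>l. Dz \<rho> i1 i2 i3 m p l k" and Fb="Fz \<rho> k i1 i2 ((i3+1) mod N3) m p" and c=bhat])
       (rule Mop_linear, rule Mop_sym[OF D3_skew], rule stage_z[OF hr that(1-5) _ that(6)], assumption,
        rule update_z[OF hr that], (rule symp_z; assumption))
  have stepz: "2*dz*(\<Sum>m<s. \<Sum>p<iota. \<Sum>l<sigma. btil m * bbar p * bhat l * (\<Sum>k<r. b k * X3 i1 i2 i3 m p l k))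
     = P3 i1 i2 ((i3+1) mod N3) - P3 i1 i2 i3" if "i1 < N1" "i2 < N2" "i3 < N3" for i1 i2 i3
  proof -
    have "2*dz*(\<Sum>m<s. \<Sum>p<iota. \<Sum>l<sigma. btil m * bbar p * bhat l * (\<Sum>k<r. b k * X3 i1 i2 i3 m p l k))
        = (\<Sum>m<s. \<Sum>p<iota. \<Sum>k<r. btil m * bbar p * b k *
            (Qz (Fz \<rho> k i1 i2 ((i3+1) mod N3) m p) - Qz (Fz \<rho> k i1 i2 i3 m p)))"
    proof -
      have "2*dz*(\<Sum>m<s. \<Sum>p<iota. \<Sum>l<sigma. btil m * bbar p * bhat l * (\<Sum>k<r. b k * X3 i1 i2 i3 m p l k))
          = 2*dz*(\<Sum>m<s. \<Sum>p<iota. \<Sum>k<r. btil m * bbar p * b k * (\<Sum>l<sigma. bhat l * X3 i1 i2 i3 m p l k))"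
        by (rule arg_cong[where f="\<lambda>x. 2*dz*x"], rule reord_z)
      also have "\<dots> = (\<Sum>m<s. \<Sum>p<iota. \<Sum>k<r. btil m * bbar p * b k * (2*dz*(\<Sum>l<sigma. bhat l * X3 i1 i2 i3 m p l k)))"
        by (simp add: sum_distrib_left mult_ac)
      also have "\<dots> = (\<Sum>m<s. \<Sum>p<iota. \<Sum>k<r. btil m * bbar p * b k *
            (Qz (Fz \<rho> k i1 i2 ((i3+1) mod N3) m p) - Qz (Fz \<rho> k i1 i2 i3 m p)))"
        by (intro sum.cong refl) (use spz[OF that] in auto)
      finally show ?thesis .
    qed
    also have "\<dots> = P3 i1 i2 ((i3+1) mod N3) - P3 i1 i2 i3"
      by (simp add: P3_def sum_subtractf right_diff_distrib)
    finally show ?thesis .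
  qed
  have S3: "(\<Sum>i1<N1. \<Sum>i2<N2. \<Sum>i3<N3. \<Sum>m<s. \<Sum>p<iota. \<Sum>l<sigma. btil m * bbar p * bhat l * (\<Sum>k<r. b k * X3 i1 i2 i3 m p l k)) = 0"
  proof -
    have "2*dz*(\<Sum>i1<N1. \<Sum>i2<N2. \<Sum>i3<N3. \<Sum>m<s. \<Sum>p<iota. \<Sum>l<sigma. btil m * bbar p * bhat l * (\<Sum>k<r. b k * X3 i1 i2 i3 m p l k))
       = (\<Sum>i1<N1. \<Sum>i2<N2. \<Sum>i3<N3. P3 i1 i2 ((i3+1) mod N3) - P3 i1 i2 i3)"
      unfolding sum_distrib_left[of "2*dz" _ "{..<N1}"] sum_distrib_left[of "2*dz" _ "{..<N2}"]
        sum_distrib_left[of "2*dz" _ "{..<N3}"]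
      by (intro sum.cong refl) (simp add: stepz)
    also have "\<dots> = 0" by (rule sum.neutral, rule ballI, rule sum.neutral, rule ballI, rule telescope)
    finally show ?thesis using dz_pos by simp
  qed

  have main: "(\<Sum>i1<N1. \<Sum>i2<N2. \<Sum>i3<N3. \<Sum>m<s. \<Sum>p<iota. \<Sum>l<sigma. btil m * bbar p * bhat l * EN (Suc \<rho>) i1 i2 i3 m p l)
     - (\<Sum>i1<N1. \<Sum>i2<N2. \<Sum>i3<N3. \<Sum>m<s. \<Sum>p<iota. \<Sum>l<sigma. btil m * bbar p * bhat l * EN \<rho> i1 i2 i3 m p l) = 0"
  proof -
    have "(\<Sum>i1<N1. \<Sum>i2<N2. \<Sum>i3<N3. \<Sum>m<s. \<Sum>p<iota. \<Sum>l<sigma. btil m * bbar p * bhat l * EN (Suc \<rho>) i1 i2 i3 m p l)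
     - (\<Sum>i1<N1. \<Sum>i2<N2. \<Sum>i3<N3. \<Sum>m<s. \<Sum>p<iota. \<Sum>l<sigma. btil m * bbar p * bhat l * EN \<rho> i1 i2 i3 m p l)
     = (\<Sum>i1<N1. \<Sum>i2<N2. \<Sum>i3<N3. \<Sum>m<s. \<Sum>p<iota. \<Sum>l<sigma. btil m * bbar p * bhat l * (EN (Suc \<rho>) i1 i2 i3 m p l - EN \<rho> i1 i2 i3 m p l))"
      by (simp add: sum_subtractf right_diff_distrib)
    also have "\<dots> = (\<Sum>i1<N1. \<Sum>i2<N2. \<Sum>i3<N3. \<Sum>m<s. \<Sum>p<iota. \<Sum>l<sigma.
        (-2*tau) * (btil m * bbar p * bhat l * (\<Sum>k<r. b k * X1 i1 i2 i3 m p l k))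
      + (-2*tau) * (btil m * bbar p * bhat l * (\<Sum>k<r. b k * X2 i1 i2 i3 m p l k))
      + (-2*tau) * (btil m * bbar p * bhat l * (\<Sum>k<r. b k * X3 i1 i2 i3 m p l k)))"
    proof (intro sum.cong refl)
      fix i1 i2 i3 m p l assume "i1 \<in> {..<N1}" "i2 \<in> {..<N2}" "i3 \<in> {..<N3}" "m \<in> {..<s}" "p \<in> {..<iota}" "l \<in> {..<sigma}"
      then have bds: "i1 < N1" "i2 < N2" "i3 < N3" "m < s" "p < iota" "l < sigma" by auto
      have sp: "(\<Sum>k<r. b k * (X1 i1 i2 i3 m p l k + X2 i1 i2 i3 m p l k + X3 i1 i2 i3 m p l k))
          = (\<Sum>k<r. b k * X1 i1 i2 i3 m p l k) + (\<Sum>k<r. b k * X2 i1 i2 i3 m p l k) + (\<Sum>k<r. b k * X3 i1 i2 i3 m p l k)"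
        by (simp add: distrib_left sum.distrib)
      show "btil m * bbar p * bhat l * (EN (Suc \<rho>) i1 i2 i3 m p l - EN \<rho> i1 i2 i3 m p l) =
        (-2*tau) * (btil m * bbar p * bhat l * (\<Sum>k<r. b k * X1 i1 i2 i3 m p l k))
      + (-2*tau) * (btil m * bbar p * bhat l * (\<Sum>k<r. b k * X2 i1 i2 i3 m p l k))
      + (-2*tau) * (btil m * bbar p * bhat l * (\<Sum>k<r. b k * X3 i1 i2 i3 m p l k))"
        unfolding cell[OF bds] sp by algebra
    qed
    also have "\<dots> = (-2*tau) * (\<Sum>i1<N1. \<Sum>i2<N2. \<Sum>i3<N3. \<Sum>m<s. \<Sum>p<iota. \<Sum>l<sigma. btil m * bbar p * bhat l * (\<Sum>k<r. b k * X1 i1 i2 i3 m p l k))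
      + (-2*tau) * (\<Sum>i1<N1. \<Sum>i2<N2. \<Sum>i3<N3. \<Sum>m<s. \<Sum>p<iota. \<Sum>l<sigma. btil m * bbar p * bhat l * (\<Sum>k<r. b k * X2 i1 i2 i3 m p l k))
      + (-2*tau) * (\<Sum>i1<N1. \<Sum>i2<N2. \<Sum>i3<N3. \<Sum>m<s. \<Sum>p<iota. \<Sum>l<sigma. btil m * bbar p * bhat l * (\<Sum>k<r. b k * X3 i1 i2 i3 m p l k))"
      by (rule lin6[where t="-2*tau" and F="\<lambda>i1 i2 i3 m p l. btil m * bbar p * bhat l * (\<Sum>k<r. b k * X1 i1 i2 i3 m p l k)" and G="\<lambda>i1 i2 i3 m p l. btil m * bbar p * bhat l * (\<Sum>k<r. b k * X2 i1 i2 i3 m p l k)" and H="\<lambda>i1 i2 i3 m p l. btil m * bbar p * bhat l * (\<Sum>k<r. b k * X3 i1 i2 i3 m p l k)"])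
    also have "\<dots> = 0" unfolding S1 S2 S3 by simp
    finally show ?thesis .
  qed
  show "(\<Sum>i1<N1. \<Sum>i2<N2. \<Sum>i3<N3. \<Sum>m<s. \<Sum>p<iota. \<Sum>l<sigma.
        btil m * bbar p * bhat l * ((norm (Epart (T (Suc \<rho>) i1 i2 i3 m p l)))\<^sup>2 + (norm (Hpart (T (Suc \<rho>) i1 i2 i3 m p l)))\<^sup>2))
  = (\<Sum>i1<N1. \<Sum>i2<N2. \<Sum>i3<N3. \<Sum>m<s. \<Sum>p<iota. \<Sum>l<sigma.
        btil m * bbar p * bhat l * ((norm (Epart (T \<rho> i1 i2 i3 m p l)))\<^sup>2 + (norm (Hpart (T \<rho> i1 i2 i3 m p l)))\<^sup>2))"
    using main unfolding EN_def by simp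
qed


end
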